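(* Let $R$ be a ring with a nice topology. If $R$ is unit-regular, then $R$ is a full exchange ring.
   Context: $R$ is unit-regular if every $x\in R$ satisfies $x=xux$ for some unit $u$. A linear Hausdorff topology on $R$ is a ring topology with a basis $\mathfrak U$ of neighborhoods of $0$ consisting of left ideals, with $\bigcap_{U\in\mathfrak U}U=0$. A family $\{x_i\}_{i\in I}\subseteq R$ is summable to $r$ if for every $U\in\mathfrak U$ there is a finite $F'\subseteq I$ with $\sum_{i\in F}x_i-r\in U$ for all finite $F$ with $F'\subseteq F\subseteq I$ (write $\sum_{i\in I}x_i=r$; the family is then called summable). The topology is nice if it is linear, Hausdorff, and for every summable family $\{x_i\}_{i\in I}$ and every family $\{r_i\}_{i\in I}\subseteq R$ the family $\{r_ix_i\}_{i\in I}$ is summable. For a cardinal $\aleph$, $R$ is an $\aleph$-exchange ring if for every family $\{x_i\}_{i\in I}$ with $|I|\le\aleph$ summable to $1$ there exist pairwise orthogonal idempotents $e_i\in Rx_i$ forming a summable family with $\sum_{i\in I}e_i=1$; $R$ is a full exchange ring if it is an $\aleph$-exchange ring for every cardinal $\aleph$. *)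

theory Defs
  imports Main
begin

definition left_ideal :: "'a::ring_1 set \<Rightarrow> bool" where
  "left_ideal L \<longleftrightarrow> 0 \<in> L \<and> (\<forall>x\<in>L. \<forall>y\<in>L. x + y \<in> L)
     \<and> (\<forall>r x. x \<in> L \<longrightarrow> r * x \<in> L)"

text \<open>A family of left ideals forming a basis of neighbourhoods of 0 of a ring topology
  (directed downwards; right multiplication by a fixed element is continuous),
  with zero intersection (Hausdorff).\<close>
definition linear_hausdorff_topology :: "'a::ring_1 set set \<Rightarrow> bool" where
  "linear_hausdorff_topology \<U> \<longleftrightarrow>
     \<U> \<noteq> {} \<and> (\<forall>U\<in>\<U>. left_ideal U)
     \<and> (\<forall>U\<in>\<U>. \<forall>V\<in>\<U>. \<exists>W\<in>\<U>. W \<subseteq> U \<inter> V)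
     \<and> (\<forall>U\<in>\<U>. \<forall>r. \<exists>V\<in>\<U>. (\<lambda>v. v * r) ` V \<subseteq> U)
     \<and> \<Inter>\<U> = {0}"

definition has_sum_top :: "'a::ring_1 set set \<Rightarrow> ('i \<Rightarrow> 'a) \<Rightarrow> 'i set \<Rightarrow> 'a \<Rightarrow> bool" where
  "has_sum_top \<U> x I r \<longleftrightarrow>
     (\<forall>U\<in>\<U>. \<exists>F'. finite F' \<and> F' \<subseteq> I \<and>
        (\<forall>F. finite F \<and> F' \<subseteq> F \<and> F \<subseteq> I \<longrightarrow> sum x F - r \<in> U))"

definition summable_top :: "'a::ring_1 set set \<Rightarrow> ('i \<Rightarrow> 'a) \<Rightarrow> 'i set \<Rightarrow> bool" where
  "summable_top \<U> x I \<longleftrightarrow> (\<exists>r. has_sum_top \<U> x I r)"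

definition nice_topology :: "'i itself \<Rightarrow> 'a::ring_1 set set \<Rightarrow> bool" where
  "nice_topology _ \<U> \<longleftrightarrow> linear_hausdorff_topology \<U> \<and>
     (\<forall>(I::'i set) x r. summable_top \<U> x I \<longrightarrow> summable_top \<U> (\<lambda>i. r i * x i) I)"

definition is_unit :: "'a::ring_1 \<Rightarrow> bool" where
  "is_unit u \<longleftrightarrow> (\<exists>v. u * v = 1 \<and> v * u = 1)"

definition unit_regular :: "'a::ring_1 itself \<Rightarrow> bool" where
  "unit_regular _ \<longleftrightarrow> (\<forall>x::'a. \<exists>u. is_unit u \<and> x = x * u * x)"

definition exchange_for :: "'a::ring_1 set set \<Rightarrow> 'i set \<Rightarrow> bool" where
  "exchange_for \<U> I \<longleftrightarrow>
     (\<forall>x. has_sum_top \<U> x I 1 \<longrightarrow>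
        (\<exists>e. (\<forall>i\<in>I. e i * e i = e i \<and> (\<exists>r. e i = r * x i))
           \<and> (\<forall>i\<in>I. \<forall>j\<in>I. i \<noteq> j \<longrightarrow> e i * e j = 0)
           \<and> has_sum_top \<U> e I 1))"

text \<open>Full exchange ring (relative to index type 'i): aleph-exchange for every cardinal
  aleph realised by subsets of 'i. Since 'i is arbitrary, this covers every cardinal.\<close>
definition full_exchange :: "'i itself \<Rightarrow> 'a::ring_1 set set \<Rightarrow> bool" where
  "full_exchange _ \<U> \<longleftrightarrow> (\<forall>I::'i set. exchange_for \<U> I)"

end

theory Submission
  imports Defs
begin


lemma exists_wo: "\<exists>lt::('i\<times>'i) set. wf lt \<and> trans lt \<and> (\<forall>i j. i \<noteq> j \<longrightarrow> (i,j) \<in> lt \<or> (j,i) \<in> lt)"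
proof -
  from well_ordering[where 'a='i] obtain r :: "'i rel" where r: "Well_order r" "Field r = UNIV" by (elim exE conjE)
  from r have wo: "well_order_on UNIV r" by (simp only:)
  then have lo: "linear_order_on UNIV r" unfolding well_order_on_def by (rule conjunct1)
  from wo have wf: "wf (r - Id)" unfolding well_order_on_def by (rule conjunct2)
  have s: "strict_linear_order_on UNIV (r - Id)" using strict_linear_order_on_diff_Id[OF lo] .
  then have t: "trans (r - Id)" unfolding strict_linear_order_on_def by (rule conjunct1)
  from s have to: "total_on UNIV (r - Id)" unfolding strict_linear_order_on_def by (elim conjE)
  have tt: "\<forall>i j. i \<noteq> j \<longrightarrow> (i,j) \<in> r - Id \<or> (j,i) \<in> r - Id"
    using to unfolding total_on_def by simp
  show ?thesis by (rule exI[of _ "r - Id"]) (intro conjI wf t tt)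
qed

lemma lht_li: "linear_hausdorff_topology \<U> \<Longrightarrow> U \<in> \<U> \<Longrightarrow> left_ideal U"
  by (simp add: linear_hausdorff_topology_def)

lemma li_zero: "left_ideal U \<Longrightarrow> 0 \<in> U" by (simp add: left_ideal_def)
lemma li_add: "left_ideal U \<Longrightarrow> a \<in> U \<Longrightarrow> b \<in> U \<Longrightarrow> a + b \<in> U" by (simp add: left_ideal_def)
lemma li_mult: "left_ideal U \<Longrightarrow> a \<in> U \<Longrightarrow> r * a \<in> U" by (simp add: left_ideal_def)
lemma li_diff: "left_ideal U \<Longrightarrow> a \<in> U \<Longrightarrow> b \<in> U \<Longrightarrow> a - b \<in> U"
proof -
  assume L: "left_ideal U" "a \<in> U" "b \<in> U"
  have "(- 1) * b \<in> U" using li_mult[OF L(1) L(3)] .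
  then have "a + (- 1) * b \<in> U" by (rule li_add[OF L(1) L(2)])
  moreover have "a - b = a + (- 1) * b" by simp
  ultimately show ?thesis by (simp only:)
qed

lemma hs_D:
  assumes h: "has_sum_top \<U> x I r" and U: "U \<in> \<U>"
  obtains F' where "finite F'" "F' \<subseteq> I" "\<And>F. finite F \<Longrightarrow> F' \<subseteq> F \<Longrightarrow> F \<subseteq> I \<Longrightarrow> sum x F - r \<in> U"
proof -
  from h U have "\<exists>F'. finite F' \<and> F' \<subseteq> I \<and> (\<forall>F. finite F \<and> F' \<subseteq> F \<and> F \<subseteq> I \<longrightarrow> sum x F - r \<in> U)"
    unfolding has_sum_top_def by (rule bspec)
  then obtain F' where F': "finite F' \<and> F' \<subseteq> I \<and> (\<forall>F. finite F \<and> F' \<subseteq> F \<and> F \<subseteq> I \<longrightarrow> sum x F - r \<in> U)"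
    by (rule exE)
  show ?thesis by (rule that[of F']) (use F' in simp_all)
qed

lemma hs_unique:
  assumes T: "linear_hausdorff_topology \<U>" and h1: "has_sum_top \<U> x I r" and h2: "has_sum_top \<U> x I r'"
  shows "r = r'"
proof -
  have "r' - r \<in> U" if U: "U \<in> \<U>" for U
  proof -
    obtain F1 where F1: "finite F1" "F1 \<subseteq> I" "\<And>F. finite F \<Longrightarrow> F1 \<subseteq> F \<Longrightarrow> F \<subseteq> I \<Longrightarrow> sum x F - r \<in> U"
      by (rule hs_D[OF h1 U], rule that)
    obtain F2 where F2: "finite F2" "F2 \<subseteq> I" "\<And>F. finite F \<Longrightarrow> F2 \<subseteq> F \<Longrightarrow> F \<subseteq> I \<Longrightarrow> sum x F - r' \<in> U"
      by (rule hs_D[OF h2 U], rule that)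
    have a: "sum x (F1 \<union> F2) - r \<in> U" using F1(3)[of "F1 \<union> F2"] F1 F2 by simp
    have b: "sum x (F1 \<union> F2) - r' \<in> U" using F2(3)[of "F1 \<union> F2"] F1 F2 by simp
    have "(sum x (F1 \<union> F2) - r) - (sum x (F1 \<union> F2) - r') \<in> U"
      using li_diff[OF lht_li[OF T U] a b] .
    then show ?thesis by simp
  qed
  then have "r' - r \<in> \<Inter>\<U>" by (rule InterI)
  moreover have "\<Inter>\<U> = {0}" using T unfolding linear_hausdorff_topology_def by (elim conjE)
  ultimately have "r' - r \<in> {0}" by (simp only:)
  then show ?thesis by simp
qed

lemma hs_I:
  assumes "\<And>U. U \<in> \<U> \<Longrightarrow> \<exists>F'. finite F' \<and> F' \<subseteq> I \<and> (\<forall>F. finite F \<and> F' \<subseteq> F \<and> F \<subseteq> I \<longrightarrow> sum x F - r \<in> U)"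
  shows "has_sum_top \<U> x I r"
  using assms unfolding has_sum_top_def by (intro ballI)

lemma hs_left:
  assumes T: "linear_hausdorff_topology \<U>" and h: "has_sum_top \<U> x I r"
  shows "has_sum_top \<U> (\<lambda>i. c * x i) I (c * r)"
proof (rule hs_I)
  fix U assume U: "U \<in> \<U>"
  obtain F' where F': "finite F'" "F' \<subseteq> I" "\<And>F. finite F \<Longrightarrow> F' \<subseteq> F \<Longrightarrow> F \<subseteq> I \<Longrightarrow> sum x F - r \<in> U"
    by (rule hs_D[OF h U], rule that)
  show "\<exists>F'. finite F' \<and> F' \<subseteq> I \<and> (\<forall>F. finite F \<and> F' \<subseteq> F \<and> F \<subseteq> I \<longrightarrow> (\<Sum>i\<in>F. c * x i) - c * r \<in> U)"
  proof (intro exI[of _ F'] conjI allI impI F'(1) F'(2), elim conjE)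
    fix F assume F: "finite F" "F' \<subseteq> F" "F \<subseteq> I"
    have "c * (sum x F - r) \<in> U" by (rule li_mult[OF lht_li[OF T U] F'(3)[OF F]])
    then show "(\<Sum>i\<in>F. c * x i) - c * r \<in> U" by (simp add: sum_distrib_left right_diff_distrib)
  qed
qed

lemma hs_right:
  assumes T: "linear_hausdorff_topology \<U>" and h: "has_sum_top \<U> x I r"
  shows "has_sum_top \<U> (\<lambda>i. x i * c) I (r * c)"
proof (rule hs_I)
  fix U assume U: "U \<in> \<U>"
  have "\<forall>U\<in>\<U>. \<forall>r. \<exists>V\<in>\<U>. (\<lambda>v. v * r) ` V \<subseteq> U" using T unfolding linear_hausdorff_topology_def by (elim conjE)
  then have "\<exists>V\<in>\<U>. (\<lambda>v. v * c) ` V \<subseteq> U" using U by simp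
  then obtain V where V: "V \<in> \<U>" "(\<lambda>v. v * c) ` V \<subseteq> U" by (elim bexE) simp
  obtain F' where F': "finite F'" "F' \<subseteq> I" "\<And>F. finite F \<Longrightarrow> F' \<subseteq> F \<Longrightarrow> F \<subseteq> I \<Longrightarrow> sum x F - r \<in> V"
    by (rule hs_D[OF h V(1)], rule that)
  show "\<exists>F'. finite F' \<and> F' \<subseteq> I \<and> (\<forall>F. finite F \<and> F' \<subseteq> F \<and> F \<subseteq> I \<longrightarrow> (\<Sum>i\<in>F. x i * c) - r * c \<in> U)"
  proof (intro exI[of _ F'] conjI allI impI F'(1) F'(2), elim conjE)
    fix F assume F: "finite F" "F' \<subseteq> F" "F \<subseteq> I"
    have "(sum x F - r) * c \<in> (\<lambda>v. v * c) ` V" using F'(3)[OF F] by (rule imageI)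
    then have "(sum x F - r) * c \<in> U" using V(2) by (rule subsetD[rotated])
    then show "(\<Sum>i\<in>F. x i * c) - r * c \<in> U" by (simp add: sum_distrib_right left_diff_distrib)
  qed
qed

lemma hs_cong:
  assumes "\<And>i. i \<in> I \<Longrightarrow> x i = y i" and "has_sum_top \<U> x I r"
  shows "has_sum_top \<U> y I r"
proof -
  have "sum x F = sum y F" if "F \<subseteq> I" for F using assms(1) that by (meson subsetD sum.cong)
  then show ?thesis using assms(2) unfolding has_sum_top_def by metis
qed

lemma hs_zero:
  assumes T: "linear_hausdorff_topology \<U>" and "\<And>i. i \<in> I \<Longrightarrow> x i = 0"
  shows "has_sum_top \<U> x I 0"
  unfolding has_sum_top_def
proof (intro ballI exI[of _ "{}"] conjI allI impI)
  fix U F assume U: "U \<in> \<U>" and F: "finite F \<and> {} \<subseteq> F \<and> F \<subseteq> I"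
  have "sum x F = 0" using F assms(2) by (meson subsetD sum.neutral)
  then show "sum x F - 0 \<in> U" using li_zero[OF lht_li[OF T U]] by simp
qed auto

lemma hs_single:
  assumes T: "linear_hausdorff_topology \<U>" and j: "j \<in> I" and z: "\<And>i. i \<in> I \<Longrightarrow> i \<noteq> j \<Longrightarrow> x i = 0"
  shows "has_sum_top \<U> x I (x j)"
  unfolding has_sum_top_def
proof (intro ballI exI[of _ "{j}"] conjI allI impI)
  fix U F assume U: "U \<in> \<U>" and F: "finite F \<and> {j} \<subseteq> F \<and> F \<subseteq> I"
  have "sum x F = x j + sum x (F - {j})" using F by (simp add: sum.remove)
  moreover have "sum x (F - {j}) = 0" using F z by (intro sum.neutral) auto
  ultimately show "sum x F - x j \<in> U" using li_zero[OF lht_li[OF T U]] by simp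
qed (use j in auto)

lemma hs_restrict:
  assumes h: "has_sum_top \<U> x I r" and P: "P \<subseteq> I" and z: "\<And>i. i \<in> I \<Longrightarrow> i \<notin> P \<Longrightarrow> x i = 0"
  shows "has_sum_top \<U> x P r"
proof (rule hs_I)
  fix U assume U: "U \<in> \<U>"
  obtain F' where F': "finite F'" "F' \<subseteq> I" "\<And>F. finite F \<Longrightarrow> F' \<subseteq> F \<Longrightarrow> F \<subseteq> I \<Longrightarrow> sum x F - r \<in> U"
    by (rule hs_D[OF h U], rule that)
  show "\<exists>F'. finite F' \<and> F' \<subseteq> P \<and> (\<forall>F. finite F \<and> F' \<subseteq> F \<and> F \<subseteq> P \<longrightarrow> sum x F - r \<in> U)"
  proof (intro exI[of _ "F' \<inter> P"] conjI allI impI)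
    show "finite (F' \<inter> P)" using F'(1) by simp
    show "F' \<inter> P \<subseteq> P" by simp
    fix F assume F0: "finite F \<and> F' \<inter> P \<subseteq> F \<and> F \<subseteq> P"
    then have F: "finite F" "F' \<inter> P \<subseteq> F" "F \<subseteq> P" by simp_all
    have "sum x (F \<union> F') = sum x F"
    proof (rule sum.mono_neutral_right)
      show "finite (F \<union> F')" using F(1) F'(1) by simp
      show "F \<subseteq> F \<union> F'" by simp
      show "\<forall>i\<in>F \<union> F' - F. x i = 0"
      proof
        fix i assume i: "i \<in> F \<union> F' - F"
        then have "i \<in> F'" "i \<notin> F" by auto
        then have "i \<in> I" "i \<notin> P" using F'(2) F(2) by auto
        then show "x i = 0" by (rule z)
      qed
    qed
    moreover have "sum x (F \<union> F') - r \<in> U"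
      by (rule F'(3)) (use F(1) F'(1) F(3) F'(2) P in auto)
    ultimately show "sum x F - r \<in> U" by simp
  qed
qed

lemma nice_sum:
  assumes N: "nice_topology TYPE('i) \<U>" and h: "has_sum_top \<U> (x::'i \<Rightarrow> 'a::ring_1) I 1" and P: "P \<subseteq> I"
  shows "\<exists>s. has_sum_top \<U> (\<lambda>i. c i * x i) P s"
proof -
  have sx: "summable_top \<U> x I" unfolding summable_top_def by (rule exI[of _ 1]) (rule h)
  have "\<forall>(I::'i set) x r. summable_top \<U> x I \<longrightarrow> summable_top \<U> (\<lambda>i. r i * x i) I"
    using N unfolding nice_topology_def by (elim conjE)
  then have "summable_top \<U> (\<lambda>i. (if i \<in> P then c i else 0) * x i) I"
    using sx by (elim allE impE)
  then obtain s where s: "has_sum_top \<U> (\<lambda>i. (if i \<in> P then c i else 0) * x i) I s"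
    unfolding summable_top_def by (rule exE)
  have "has_sum_top \<U> (\<lambda>i. (if i \<in> P then c i else 0) * x i) P s"
    by (rule hs_restrict[OF s P]) simp
  then have "has_sum_top \<U> (\<lambda>i. c i * x i) P s" by (rule hs_cong[rotated]) simp
  then show ?thesis by (rule exI)
qed

lemma inj_unit:
  assumes U: "unit_regular TYPE('a::ring_1)" and inj: "\<And>r. (w::'a) * r = 0 \<Longrightarrow> r = 0"
  shows "\<exists>v. v * w = 1 \<and> w * v = 1"
proof -
  obtain u where u: "is_unit u" "w = w * u * w" using U unfolding unit_regular_def by blast
  obtain v where v: "u * v = 1" "v * u = 1" using u(1) unfolding is_unit_def by blast
  have "w * (u * w - 1) = 0" using u(2) by (simp add: algebra_simps)
  then have uw: "u * w = 1" using inj by fastforce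
  have "w = v" by (metis mult.assoc mult_1_left mult_1_right uw v(2))
  then show ?thesis using uw v by blast
qed

lemma UR:
  assumes U: "unit_regular TYPE('a::ring_1)" and h: "\<And>r. (s::'a) * s * r = 0 \<Longrightarrow> s * r = 0"
  shows "\<exists>y. s = s * s * y"
proof -
  obtain u where u: "is_unit u" "s = s * u * s" using U unfolding unit_regular_def by blast
  define w where "w = s + 1 - u * s"
  have "r = 0" if "w * r = 0" for r
  proof -
    have e: "s * r + r - u * s * r = 0" using that by (simp add: w_def algebra_simps)
    have "s * (s * r + r - u * s * r) = 0" using e by simp
    then have "s * s * r + s * r - s * u * s * r = 0" by (simp add: algebra_simps)
    then have "s * s * r = 0" using u(2) by simp
    then have "s * r = 0" by (rule h)
    then show "r = 0" using e by (simp add: mult.assoc)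
  qed
  then obtain v where v: "v * w = 1" "w * v = 1" using inj_unit[OF U] by blast
  have "s = s * (w * v)" using v by simp
  also have "\<dots> = (s * s + s - s * u * s) * v" by (simp add: w_def algebra_simps)
  also have "\<dots> = s * s * v" using u(2) by simp
  finally show ?thesis by blast
qed



lemma orth_sum:
  assumes T: "linear_hausdorff_topology \<U>" and h: "has_sum_top \<U> e P B"
    and idem: "\<forall>j\<in>P. e j * e j = e j"
    and orth: "\<forall>i\<in>P. \<forall>j\<in>P. i \<noteq> j \<longrightarrow> e i * e j = 0"
  shows "\<forall>j\<in>P. e j * B = e j" "\<forall>j\<in>P. B * e j = e j" "B * B = B"
proof -
  show eB: "\<forall>j\<in>P. e j * B = e j"
  proof
    fix j assume j: "j \<in> P"
    have "has_sum_top \<U> (\<lambda>i. e j * e i) P (e j * B)" by (rule hs_left[OF T h])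
    moreover have "has_sum_top \<U> (\<lambda>i. e j * e i) P (e j * e j)"
      by (rule hs_single[OF T j, of "\<lambda>i. e j * e i"]) (use orth j in auto)
    ultimately show "e j * B = e j" using hs_unique[OF T] idem j by metis
  qed
  show "\<forall>j\<in>P. B * e j = e j"
  proof
    fix j assume j: "j \<in> P"
    have "has_sum_top \<U> (\<lambda>i. e i * e j) P (B * e j)" by (rule hs_right[OF T h])
    moreover have "has_sum_top \<U> (\<lambda>i. e i * e j) P (e j * e j)"
      by (rule hs_single[OF T j, of "\<lambda>i. e i * e j"]) (use orth j in auto)
    ultimately show "B * e j = e j" using hs_unique[OF T] idem j by metis
  qed
  have "has_sum_top \<U> (\<lambda>i. e i * B) P (B * B)" by (rule hs_right[OF T h])
  then have "has_sum_top \<U> e P (B * B)" by (rule hs_cong[rotated]) (use eB in auto)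
  then show "B * B = B" using hs_unique[OF T h] by metis
qed

lemma claimB:
  assumes T: "linear_hausdorff_topology \<U>" and W: "wf lt"
    and Q: "\<forall>j\<in>P. Q j \<subseteq> P \<and> (\<forall>i\<in>Q j. (i,j) \<in> lt)"
    and hB: "\<forall>j\<in>P. has_sum_top \<U> e (Q j) (Bf j)"
    and fa: "\<forall>j\<in>P. f j * (1 - Bf j) = e j"
    and ft: "\<forall>j\<in>P. f j * t = 0"
  shows "\<forall>j\<in>P. e j * t = 0"
proof -
  have "j \<in> P \<longrightarrow> e j * t = 0" for j
  proof (induction j rule: wf_induct_rule[OF W])
    case (1 j)
    show ?case
    proof
      assume j: "j \<in> P"
      have z: "e i * t = 0" if "i \<in> Q j" for i using 1 Q j that by blast
      have "has_sum_top \<U> (\<lambda>i. e i * t) (Q j) (Bf j * t)" by (rule hs_right[OF T]) (use hB j in blast)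
      moreover have "has_sum_top \<U> (\<lambda>i. e i * t) (Q j) 0" by (rule hs_zero[OF T]) (use z in auto)
      ultimately have Bt: "Bf j * t = 0" using hs_unique[OF T] by metis
      have "e j * t = f j * (1 - Bf j) * t" using fa j by simp
      also have "\<dots> = f j * t - f j * (Bf j * t)" by (simp add: algebra_simps)
      also have "\<dots> = 0" using Bt ft j by simp
      finally show "e j * t = 0" .
    qed
  qed
  then show ?thesis by blast
qed

lemma claimA:
  assumes T: "linear_hausdorff_topology \<U>" and hf: "has_sum_top \<U> f P s"
    and ef: "\<forall>j\<in>P. e j * f j = f j"
    and orth: "\<forall>i\<in>P. \<forall>j\<in>P. i \<noteq> j \<longrightarrow> e i * e j = 0"
  shows "\<forall>j\<in>P. e j * s = f j"
proof
  fix j assume j: "j \<in> P"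
  have "has_sum_top \<U> (\<lambda>i. e j * f i) P (e j * s)" by (rule hs_left[OF T hf])
  moreover have "has_sum_top \<U> (\<lambda>i. e j * f i) P (e j * f j)"
  proof (rule hs_single[OF T j])
    fix i assume i: "i \<in> P" "i \<noteq> j"
    have "e j * f i = (e j * e i) * f i" using ef i by (metis mult.assoc)
    then show "e j * f i = 0" using orth i j by simp
  qed
  ultimately show "e j * s = f j" using hs_unique[OF T] ef j by metis
qed

lemma sum_exists:
  assumes URa: "unit_regular TYPE('a::ring_1)"
    and T: "linear_hausdorff_topology \<U>" and W: "wf lt"
    and Q: "\<forall>j\<in>P. Q j \<subseteq> P \<and> (\<forall>i\<in>Q j. (i,j) \<in> lt)"
    and hB: "\<forall>j\<in>P. has_sum_top \<U> e (Q j) (Bf j)"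
    and fa: "\<forall>j\<in>P. f j * (1 - Bf j) = (e j :: 'a)"
    and ef: "\<forall>j\<in>P. e j * f j = f j"
    and orth: "\<forall>i\<in>P. \<forall>j\<in>P. i \<noteq> j \<longrightarrow> e i * e j = 0"
    and hf: "has_sum_top \<U> f P s"
  shows "\<exists>B. has_sum_top \<U> e P B"
proof -
  have A: "\<forall>j\<in>P. e j * s = f j" by (rule claimA[OF T hf ef orth])
  have cB: "\<forall>j\<in>P. e j * t = 0" if "\<forall>j\<in>P. f j * t = 0" for t
    by (rule claimB[OF T W Q hB fa that])
  have "s * r = 0" if ssr: "s * s * r = 0" for r
  proof -
    have "\<forall>j\<in>P. f j * (s * r) = 0"
    proof
      fix j assume j: "j \<in> P"
      have "f j * (s * r) = e j * (s * s * r)" using A j by (metis mult.assoc)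
      then show "f j * (s * r) = 0" using ssr by simp
    qed
    then have "\<forall>j\<in>P. e j * (s * r) = 0" using cB by blast
    then have fr: "\<forall>j\<in>P. f j * r = 0" using A by (metis mult.assoc)
    have "has_sum_top \<U> (\<lambda>j. f j * r) P (s * r)" by (rule hs_right[OF T hf])
    moreover have "has_sum_top \<U> (\<lambda>j. f j * r) P 0" by (rule hs_zero[OF T]) (use fr in auto)
    ultimately show "s * r = 0" using hs_unique[OF T] by metis
  qed
  from UR[OF URa this] obtain y where y: "s = s * s * y" by (rule exE)
  have s0: "s * (1 - s * y) = 0"
  proof -
    have "s * (1 - s * y) = s - s * s * y" by (simp add: right_diff_distrib mult.assoc)
    also have "\<dots> = 0" by (simp add: y[symmetric])
    finally show ?thesis .
  qed
  have "\<forall>j\<in>P. f j * (1 - s * y) = 0"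
  proof
    fix j assume j: "j \<in> P"
    have fj: "f j = e j * s" using A j by simp
    have "f j * (1 - s * y) = e j * (s * (1 - s * y))" by (simp add: fj mult.assoc)
    then show "f j * (1 - s * y) = 0" by (simp add: s0)
  qed
  then have e0: "\<forall>j\<in>P. e j * (1 - s * y) = 0" by (rule cB)
  have ey: "\<forall>j\<in>P. e j = f j * y"
  proof
    fix j assume j: "j \<in> P"
    have fj: "f j = e j * s" using A j by simp
    have "e j - e j * s * y = e j * (1 - s * y)" by (simp add: right_diff_distrib mult.assoc)
    also have "\<dots> = 0" using e0 j by simp
    finally have "e j = e j * s * y" by simp
    then show "e j = f j * y" by (simp add: fj)
  qed
  have "has_sum_top \<U> (\<lambda>j. f j * y) P (s * y)" by (rule hs_right[OF T hf])
  then have "has_sum_top \<U> e P (s * y)" by (rule hs_cong[rotated]) (use ey in simp)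
  then show ?thesis by (rule exI)
qed



theorem corollary4:
  fixes \<U> :: "'a::ring_1 set set"
  assumes "nice_topology TYPE('i) \<U>"
    and "unit_regular TYPE('a)"
  shows "full_exchange TYPE('i) \<U>"
  unfolding full_exchange_def exchange_for_def
proof (intro allI impI)
  note N = assms(1) and UR = assms(2)
  fix I :: "'i set" and x :: "'i \<Rightarrow> 'a" assume hx: "has_sum_top \<U> x I 1"
  have T: "linear_hausdorff_topology \<U>" using N by (simp add: nice_topology_def)
  from exists_wo[where 'i='i] obtain lt :: "('i\<times>'i) set" where W: "wf lt" and tr: "trans lt"
    and tot0: "\<forall>i j. i \<noteq> j \<longrightarrow> (i,j) \<in> lt \<or> (j,i) \<in> lt"
    by (elim exE conjE)
  have tot: "(i,j) \<in> lt \<or> (j,i) \<in> lt" if "i \<noteq> j" for i j using tot0 that by simp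
  define Q where "Q k = {j \<in> I. (j,k) \<in> lt}" for k
  define Bof where "Bof g k = (THE b. has_sum_top \<U> g (Q k) b)" for g :: "'i \<Rightarrow> 'a" and k
  define H where "H g k = (let a = 1 - Bof g k; z = a * x k * a in (a * (SOME w. z * w * z = z) * a) * z)"
    for g k
  define e where "e = wfrec lt H"
  have Bcut: "Bof (cut e lt k) k = Bof e k" for k
  proof -
    have "has_sum_top \<U> (cut e lt k) (Q k) b \<longleftrightarrow> has_sum_top \<U> e (Q k) b" for b
    proof
      assume "has_sum_top \<U> (cut e lt k) (Q k) b"
      then show "has_sum_top \<U> e (Q k) b" by (rule hs_cong[rotated]) (simp add: Q_def cut_apply)
    next
      assume "has_sum_top \<U> e (Q k) b"
      then show "has_sum_top \<U> (cut e lt k) (Q k) b" by (rule hs_cong[rotated]) (simp add: Q_def cut_apply)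
    qed
    then have eq: "has_sum_top \<U> (cut e lt k) (Q k) = has_sum_top \<U> e (Q k)" by (rule ext)
    show ?thesis unfolding Bof_def by (simp only: eq)
  qed
  have e_eq: "e k = H e k" for k
  proof -
    have "e k = H (cut e lt k) k" unfolding e_def by (rule wfrec[OF W])
    then show ?thesis using Bcut unfolding H_def by simp
  qed
  define B where "B k = Bof e k" for k
  define a where "a k = 1 - B k" for k
  define z where "z k = a k * x k * a k" for k
  define w where "w k = a k * (SOME w. z k * w * z k = z k) * a k" for k
  have e_wz: "e k = w k * z k" for k using e_eq[of k] by (simp add: H_def Let_def B_def a_def z_def w_def)
  define f where "f k = e k * w k * x k" for k
  have fe: "f = (\<lambda>i. (e i * w i) * x i)" by (rule ext) (simp add: f_def)
  have Inv: "k \<in> I \<longrightarrow> (has_sum_top \<U> e (Q k) (B k) \<and> e k * e k = e k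
      \<and> (\<forall>j\<in>Q k. e k * e j = 0 \<and> e j * e k = 0) \<and> e k * f k = f k \<and> f k * a k = e k
      \<and> z k * e k = z k)" for k
  proof (induction k rule: wf_induct_rule[OF W])
    case (1 k)
    show ?case
    proof
      assume k: "k \<in> I"
      have IH: "has_sum_top \<U> e (Q j) (B j) \<and> e j * e j = e j
          \<and> (\<forall>i\<in>Q j. e j * e i = 0 \<and> e i * e j = 0) \<and> e j * f j = f j \<and> f j * a j = e j
          \<and> z j * e j = z j" if "j \<in> Q k" for j
        using 1 that by (auto simp: Q_def)
      have orth: "\<forall>i\<in>Q k. \<forall>j\<in>Q k. i \<noteq> j \<longrightarrow> e i * e j = 0"
      proof (intro ballI impI)
        fix i j assume ij: "i \<in> Q k" "j \<in> Q k" "i \<noteq> j"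
        show "e i * e j = 0"
        proof (cases "(i,j) \<in> lt")
          case True
          then have "i \<in> Q j" using ij by (auto simp: Q_def)
          then show ?thesis using IH[OF ij(2)] by blast
        next
          case False
          then have "(j,i) \<in> lt" using tot ij(3) by blast
          then have "j \<in> Q i" using ij by (auto simp: Q_def)
          then show ?thesis using IH[OF ij(1)] by blast
        qed
      qed
      have Qsub: "\<forall>j\<in>Q k. Q j \<subseteq> Q k \<and> (\<forall>i\<in>Q j. (i,j) \<in> lt)"
        using tr by (auto simp: Q_def dest: transD)
      have QkI: "Q k \<subseteq> I" by (auto simp: Q_def)
      from nice_sum[OF N hx QkI, of "\<lambda>j. e j * w j"] obtain s where hs: "has_sum_top \<U> f (Q k) s"
        unfolding fe by (rule exE)
      have "\<exists>b. has_sum_top \<U> e (Q k) b"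
        by (rule sum_exists[where Bf=B, OF UR T W Qsub _ _ _ orth hs])
           (use IH in \<open>auto simp: a_def\<close>)
      then obtain b where hb: "has_sum_top \<U> e (Q k) b" by (rule exE)
      have Bk: "B k = b" unfolding B_def Bof_def
      proof (rule the_equality)
        show "has_sum_top \<U> e (Q k) b" by (rule hb)
        fix b' assume "has_sum_top \<U> e (Q k) b'"
        then show "b' = b" using hs_unique[OF T hb] by simp
      qed
      have hBk: "has_sum_top \<U> e (Q k) (B k)" using hb Bk by simp
      have idem: "\<forall>j\<in>Q k. e j * e j = e j" using IH by blast
      note os = orth_sum[OF T hBk idem orth]
      have aa: "a k * a k = a k" using os(3) by (simp add: a_def algebra_simps)
      have ea: "e j * a k = 0" "a k * e j = 0" if "j \<in> Q k" for j
        using os(1) os(2) that by (auto simp: a_def algebra_simps)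
      have za: "z k * a k = z k" "a k * z k = z k" using aa
        by (simp_all add: z_def mult.assoc) (simp add: mult.assoc[symmetric])
      define w0 where "w0 = (SOME w. z k * w * z k = z k)"
      have w0: "z k * w0 * z k = z k"
      proof -
        obtain u where "z k = z k * u * z k" using UR unfolding unit_regular_def by blast
        then show ?thesis unfolding w0_def by (metis (mono_tags, lifting) someI_ex)
      qed
      have wk: "w k = a k * w0 * a k" by (simp add: w_def w0_def)
      have zwz: "z k * w k * z k = z k"
      proof -
        have "z k * w k * z k = (z k * a k) * w0 * (a k * z k)" by (simp add: wk mult.assoc)
        then show ?thesis using za w0 by simp
      qed
      have wa: "w k * a k = w k" using aa by (simp add: wk mult.assoc)
      have ee: "e k * e k = e k"
      proof -
        have "e k * e k = w k * (z k * w k * z k)" by (simp add: e_wz mult.assoc)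
        then show ?thesis using zwz by (simp add: e_wz)
      qed
      have orthk: "\<forall>j\<in>Q k. e k * e j = 0 \<and> e j * e k = 0"
      proof
        fix j assume j: "j \<in> Q k"
        have "e k * e j = w k * (z k * a k) * e j" using za by (simp add: e_wz mult.assoc)
        also have "\<dots> = w k * z k * (a k * e j)" by (simp add: mult.assoc)
        also have "\<dots> = 0" using ea[OF j] by simp
        finally have 1: "e k * e j = 0" .
        have "e j * e k = (e j * a k) * w0 * a k * z k" by (simp add: e_wz wk mult.assoc)
        also have "\<dots> = 0" using ea[OF j] by simp
        finally show "e k * e j = 0 \<and> e j * e k = 0" using 1 by simp
      qed
      have ef: "e k * f k = f k"
      proof -
        have "e k * f k = (e k * e k) * w k * x k" by (simp add: f_def mult.assoc)
        then show ?thesis using ee by (simp add: f_def)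
      qed
      have fa: "f k * a k = e k"
      proof -
        have "f k * a k = e k * (w k * a k * x k * a k)" using wa by (simp add: f_def mult.assoc)
        also have "\<dots> = e k * e k" by (simp add: e_wz z_def mult.assoc)
        finally show ?thesis using ee by simp
      qed
      have ze: "z k * e k = z k" using zwz by (simp add: e_wz mult.assoc)
      show "has_sum_top \<U> e (Q k) (B k) \<and> e k * e k = e k
          \<and> (\<forall>j\<in>Q k. e k * e j = 0 \<and> e j * e k = 0) \<and> e k * f k = f k \<and> f k * a k = e k
          \<and> z k * e k = z k"
        using hBk ee orthk ef fa ze by blast
    qed
  qed
  have InvI: "has_sum_top \<U> e (Q k) (B k) \<and> e k * e k = e k
      \<and> (\<forall>j\<in>Q k. e k * e j = 0 \<and> e j * e k = 0) \<and> e k * f k = f k \<and> f k * a k = e k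
      \<and> z k * e k = z k" if "k \<in> I" for k using Inv that by blast
  have orthI: "\<forall>i\<in>I. \<forall>j\<in>I. i \<noteq> j \<longrightarrow> e i * e j = 0"
  proof (intro ballI impI)
    fix i j assume ij: "i \<in> I" "j \<in> I" "i \<noteq> j"
    show "e i * e j = 0"
    proof (cases "(i,j) \<in> lt")
      case True
      then have "i \<in> Q j" using ij by (auto simp: Q_def)
      then show ?thesis using InvI[OF ij(2)] by blast
    next
      case False
      then have "(j,i) \<in> lt" using tot ij(3) by blast
      then have "j \<in> Q i" using ij by (auto simp: Q_def)
      then show ?thesis using InvI[OF ij(1)] by blast
    qed
  qed
  have QI: "\<forall>j\<in>I. Q j \<subseteq> I \<and> (\<forall>i\<in>Q j. (i,j) \<in> lt)" by (auto simp: Q_def)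
  from nice_sum[OF N hx subset_refl, of "\<lambda>j. e j * w j"] obtain s where hs: "has_sum_top \<U> f I s"
    unfolding fe by (rule exE)
  have hBI: "\<forall>j\<in>I. has_sum_top \<U> e (Q j) (B j)" and faI: "\<forall>j\<in>I. f j * (1 - B j) = e j"
    and efI: "\<forall>j\<in>I. e j * f j = f j" and idemI: "\<forall>j\<in>I. e j * e j = e j"
    using InvI by (auto simp: a_def)
  obtain Bend where hBend: "has_sum_top \<U> e I Bend"
    using sum_exists[OF UR T W QI hBI faI efI orthI hs] by blast
  note os = orth_sum[OF T hBend idemI orthI]
  define ae where "ae = 1 - Bend"
  have aeae: "ae * ae = ae" using os(3) by (simp add: ae_def algebra_simps)
  have eae: "e j * ae = 0" "ae * e j = 0" if "j \<in> I" for j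
    using os(1) os(2) that by (auto simp: ae_def algebra_simps)
  have xz: "ae * x m * ae = 0" if m: "m \<in> I" for m
  proof -
    have "has_sum_top \<U> (\<lambda>i. ae * e i) (Q m) (ae * B m)" by (rule hs_left[OF T]) (use hBI m in blast)
    moreover have "has_sum_top \<U> (\<lambda>i. ae * e i) (Q m) 0" by (rule hs_zero[OF T]) (use eae in \<open>auto simp: Q_def\<close>)
    ultimately have 1: "ae * B m = 0" using hs_unique[OF T] by metis
    have "has_sum_top \<U> (\<lambda>i. e i * ae) (Q m) (B m * ae)" by (rule hs_right[OF T]) (use hBI m in blast)
    moreover have "has_sum_top \<U> (\<lambda>i. e i * ae) (Q m) 0" by (rule hs_zero[OF T]) (use eae in \<open>auto simp: Q_def\<close>)
    ultimately have 2: "B m * ae = 0" using hs_unique[OF T] by metis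
    have aa1: "ae * a m = ae" using 1 by (simp add: a_def algebra_simps)
    have aa2: "a m * ae = ae" using 2 by (simp add: a_def algebra_simps)
    have "ae * x m * ae = (ae * a m) * x m * (a m * ae)" using aa1 aa2 by simp
    also have "\<dots> = ae * z m * ae" by (simp add: z_def mult.assoc)
    also have "\<dots> = ae * (z m * e m) * ae" using InvI[OF m] by simp
    also have "\<dots> = ae * z m * (e m * ae)" by (simp add: mult.assoc)
    also have "\<dots> = 0" using eae[OF m] by simp
    finally show ?thesis .
  qed
  have "has_sum_top \<U> (\<lambda>m. ae * x m * ae) I (ae * 1 * ae)" by (rule hs_right[OF T hs_left[OF T hx]])
  moreover have "has_sum_top \<U> (\<lambda>m. ae * x m * ae) I 0" by (rule hs_zero[OF T]) (use xz in auto)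
  ultimately have "ae * 1 * ae = 0" using hs_unique[OF T] by metis
  then have "ae = 0" using aeae by simp
  then have Bend1: "Bend = 1" by (simp add: ae_def)
  have A: "\<forall>j\<in>I. e j * s = f j" by (rule claimA[OF T hs efI orthI])
  have "r = 0" if sr: "s * r = 0" for r
  proof -
    have "\<forall>j\<in>I. f j * r = 0" using A sr by (metis mult.assoc mult_zero_right)
    then have er: "\<forall>j\<in>I. e j * r = 0" by (rule claimB[OF T W QI hBI faI])
    have "has_sum_top \<U> (\<lambda>j. e j * r) I (Bend * r)" by (rule hs_right[OF T hBend])
    moreover have "has_sum_top \<U> (\<lambda>j. e j * r) I 0" by (rule hs_zero[OF T]) (use er in auto)
    ultimately show "r = 0" using hs_unique[OF T] Bend1 by fastforce
  qed
  then obtain v where v: "v * s = 1" "s * v = 1" using inj_unit[OF UR] by blast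
  have fv: "f j * v = e j" if "j \<in> I" for j using A that v(2) by (metis mult.assoc mult.right_neutral)
  have efo: "e i * f j = 0" if "i \<in> I" "j \<in> I" "i \<noteq> j" for i j
  proof -
    have "e i * f j = (e i * e j) * f j" using efI that by (metis mult.assoc)
    then show ?thesis using orthI that by simp
  qed
  show "\<exists>e. (\<forall>i\<in>I. e i * e i = e i \<and> (\<exists>r. e i = r * x i)) \<and>
             (\<forall>i\<in>I. \<forall>j\<in>I. i \<noteq> j \<longrightarrow> e i * e j = 0) \<and> has_sum_top \<U> e I 1"
  proof (intro exI[of _ "\<lambda>j. v * f j"] conjI ballI impI)
    fix i assume i: "i \<in> I"
    have "v * f i * (v * f i) = v * (f i * v) * f i" by (simp add: mult.assoc)
    also have "\<dots> = v * f i" using fv[OF i] efI i by (simp add: mult.assoc)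
    finally show "v * f i * (v * f i) = v * f i" .
    show "\<exists>r. v * f i = r * x i" by (intro exI[of _ "v * e i * w i"]) (simp add: f_def mult.assoc)
  next
    fix i j assume ij: "i \<in> I" "j \<in> I" "i \<noteq> j"
    have "v * f i * (v * f j) = v * (f i * v) * f j" by (simp add: mult.assoc)
    also have "\<dots> = 0" using fv[OF ij(1)] efo[OF ij] by (simp add: mult.assoc)
    finally show "v * f i * (v * f j) = 0" .
  next
    show "has_sum_top \<U> (\<lambda>j. v * f j) I 1" using hs_left[OF T hs, of v] v(1) by simp
  qed
qed

end
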